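(* For every integer $n\ge1$, there exists an injective group homomorphism $D_{2^{n+1}}\hookrightarrow T\mathcal R_{2^n}(\mathbb F_2)$.
   Context: The Riordan group over $\mathbb F_2$ consists of pairs $(g,f)$ of formal power series over $\mathbb F_2$ with $g=1+\cdots$, $f=t+\cdots$, identified with lower triangular matrices $(d_{i,k})$, $d_{i,k}=[t^i]gf^k$, with matrix multiplication (equivalently $(g_1,f_1)(g_2,f_2)=(g_1\cdot(g_2\circ f_1),\,f_2\circ f_1)$). For $m\ge0$, $T\mathcal R_m(\mathbb F_2)$ is the finite group of $(m+1)\times(m+1)$ upper-left truncations $(d_{i,k})_{0\le i,k\le m}$ of these matrices. $D_{2^{q}}$ denotes the dihedral group $\langle r,s\mid r^{2^{q}}=s^2=1,\ rsr=s\rangle$ of order $2^{q+1}$. *)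

theory Defs
  imports "HOL-Library.Z2" "HOL-Computational_Algebra.Formal_Power_Series" "HOL-Algebra.Group"
begin

text \<open>Matrices over F2 (the type bit) are functions nat => nat => bit;
  an (m+1)x(m+1) truncation is stored as a function that vanishes outside {0..m}x{0..m}.\<close>

definition riordan_trunc :: "nat \<Rightarrow> bit fps \<Rightarrow> bit fps \<Rightarrow> nat \<Rightarrow> nat \<Rightarrow> bit" where
  "riordan_trunc m g f = (\<lambda>i k. if i \<le> m \<and> k \<le> m then fps_nth (g * f ^ k) i else 0)"

definition is_riordan_pair :: "bit fps \<Rightarrow> bit fps \<Rightarrow> bool" where
  "is_riordan_pair g f \<longleftrightarrow> fps_nth g 0 = 1 \<and> fps_nth f 0 = 0 \<and> fps_nth f 1 = 1"

definition trunc_mat_mult :: "nat \<Rightarrow> (nat \<Rightarrow> nat \<Rightarrow> bit) \<Rightarrow> (nat \<Rightarrow> nat \<Rightarrow> bit) \<Rightarrow> nat \<Rightarrow> nat \<Rightarrow> bit" where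
  "trunc_mat_mult m A B = (\<lambda>i k. if i \<le> m \<and> k \<le> m then (\<Sum>j\<le>m. A i j * B j k) else 0)"

definition trunc_mat_one :: "nat \<Rightarrow> nat \<Rightarrow> nat \<Rightarrow> bit" where
  "trunc_mat_one m = (\<lambda>i k. if i \<le> m \<and> k \<le> m \<and> i = k then 1 else 0)"

definition TR :: "nat \<Rightarrow> (nat \<Rightarrow> nat \<Rightarrow> bit) monoid" where
  "TR m = \<lparr> carrier = {riordan_trunc m g f | g f. is_riordan_pair g f},
            mult = trunc_mat_mult m, one = trunc_mat_one m \<rparr>"

text \<open>Dihedral group with rotation of order N (order 2N): pairs (a, x), a in {0..<N},
  representing r^a s^x; r = (1,False), s = (0,True), so r^N = s^2 = 1, r s r = s.
  D_{2^q} of the paper is dihedral (2^q).\<close>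
definition dihedral :: "nat \<Rightarrow> (nat \<times> bool) monoid" where
  "dihedral N = \<lparr> carrier = {0..<N} \<times> UNIV,
     mult = (\<lambda>(a, x) (b, y). ((if x then a + (N - b) else a + b) mod N, x \<noteq> y)),
     one = (0, False) \<rparr>"

end

theory Submission
  imports Defs
begin

lemma bit_add_self[simp]: "(a::bit) + a = 0"
  by (cases a) auto

lemma fps_add_self: "(A::bit fps) + A = 0"
  by (rule fps_ext) (simp only: fps_add_nth bit_add_self fps_zero_nth)

definition GG :: "bit fps" where "GG = 1 + fps_X"
definition FF :: "bit fps" where "FF = fps_X * inverse GG"

lemma GG0[simp]: "fps_nth GG 0 = 1" by (simp add: GG_def)
lemma FF0[simp]: "fps_nth FF 0 = 0" by (simp add: FF_def)
lemma FF1[simp]: "fps_nth FF 1 = 1" by (simp add: FF_def fps_X_mult_nth)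

lemma FF_GG: "FF * GG = fps_X"
  by (simp add: FF_def mult.assoc inverse_mult_eq_1)

lemma HH_def': "GG oo FF = 1 + FF"
  by (simp add: GG_def fps_compose_add_distrib)

lemma HH_GG: "(GG oo FF) * GG = 1"
proof -
  have "(GG oo FF) * GG = GG + FF * GG" by (simp add: HH_def' distrib_right)
  also have "\<dots> = 1 + (fps_X + fps_X)" unfolding FF_GG by (simp only: GG_def add.assoc)
  also have "\<dots> = 1" by (simp only: fps_add_self add_0_right)
  finally show ?thesis .
qed

lemma FF_FF: "FF oo FF = fps_X"
proof -
  have "FF oo FF = (fps_X oo FF) * (inverse GG oo FF)"
    unfolding FF_def by (rule fps_compose_mult_distrib) (simp add: FF_def[symmetric])
  also have "inverse GG oo FF = inverse (GG oo FF)" by (rule fps_inverse_compose) auto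
  also have "inverse (GG oo FF) = GG" using HH_GG by (rule fps_inverse_unique)
  finally show ?thesis by (simp add: FF_GG)
qed

lemma power_zero_nth: "fps_nth f 0 = 0 \<Longrightarrow> l < j \<Longrightarrow> fps_nth (f^j) l = 0"
  using startsby_zero_power_prefix[of f j] by blast

lemma mult_cong_nth:
  assumes "\<forall>l\<le>i. fps_nth A l = fps_nth B l"
  shows "fps_nth (C * A) i = fps_nth (C * B) i"
  unfolding fps_mult_nth using assms by (intro sum.cong) auto

lemma key_compose:
  fixes f g c :: "bit fps"
  assumes f0: "fps_nth f 0 = 0" and im: "i \<le> m"
  shows "fps_nth (g * (c oo f)) i = (\<Sum>j\<le>m. fps_nth c j * fps_nth (g * f^j) i)"
proof -
  define P where "P = (\<Sum>j\<le>m. fps_const (fps_nth c j) * f^j)"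
  have "\<forall>l\<le>i. fps_nth (c oo f) l = fps_nth P l"
  proof (intro allI impI)
    fix l assume li: "l \<le> i"
    have "fps_nth P l = (\<Sum>j\<le>m. fps_nth c j * fps_nth (f^j) l)"
      by (simp add: P_def fps_sum_nth)
    also have "\<dots> = (\<Sum>j\<in>{0..l}. fps_nth c j * fps_nth (f^j) l)"
      using li im f0 power_zero_nth[OF f0]
      by (intro sum.mono_neutral_right) auto
    finally show "fps_nth (c oo f) l = fps_nth P l" by (simp add: fps_compose_nth)
  qed
  then have "fps_nth (g * (c oo f)) i = fps_nth (g * P) i" by (rule mult_cong_nth)
  also have "g * P = (\<Sum>j\<le>m. fps_const (fps_nth c j) * (g * f^j))"
    by (simp add: P_def sum_distrib_left mult.left_commute)
  finally show ?thesis by (simp add: fps_sum_nth)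
qed

lemma riordan_mult:
  assumes f0: "fps_nth f1 0 = 0"
  shows "trunc_mat_mult m (riordan_trunc m g1 f1) (riordan_trunc m g2 f2)
         = riordan_trunc m (g1 * (g2 oo f1)) (f2 oo f1)"
proof (intro ext)
  fix i k
  show "trunc_mat_mult m (riordan_trunc m g1 f1) (riordan_trunc m g2 f2) i k
         = riordan_trunc m (g1 * (g2 oo f1)) (f2 oo f1) i k"
  proof (cases "i \<le> m \<and> k \<le> m")
    case True
    have "(g2 oo f1) * (f2 oo f1)^k = (g2 * f2^k) oo f1"
      by (simp add: fps_compose_mult_distrib[OF f0] fps_compose_power[OF f0])
    then have "g1 * (g2 oo f1) * (f2 oo f1)^k = g1 * ((g2 * f2^k) oo f1)"
      by (simp add: mult.assoc)
    have "trunc_mat_mult m (riordan_trunc m g1 f1) (riordan_trunc m g2 f2) i k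
       = (\<Sum>j\<le>m. riordan_trunc m g1 f1 i j * riordan_trunc m g2 f2 j k)"
      using True by (simp add: trunc_mat_mult_def del: mult_bit_eq_and add_bit_eq_xor)
    also have "\<dots> = (\<Sum>j\<le>m. fps_nth (g2 * f2^k) j * fps_nth (g1 * f1^j) i)"
      using True by (intro sum.cong) (simp_all add: riordan_trunc_def mult.commute del: mult_bit_eq_and add_bit_eq_xor)
    also have "\<dots> = fps_nth (g1 * ((g2 * f2^k) oo f1)) i"
      using True by (intro key_compose[OF f0, symmetric]) simp
    also have "\<dots> = riordan_trunc m (g1 * (g2 oo f1)) (f2 oo f1) i k"
      using True unfolding riordan_trunc_def
      \<open>g1 * (g2 oo f1) * (f2 oo f1)^k = g1 * ((g2 * f2^k) oo f1)\<close> by simp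
    finally show ?thesis .
  next
    case False
    then show ?thesis by (auto simp: trunc_mat_mult_def riordan_trunc_def)
  qed
qed

definition eqm :: "nat \<Rightarrow> bit fps \<Rightarrow> bit fps \<Rightarrow> bool" where
  "eqm m P Q \<longleftrightarrow> (\<forall>i\<le>m. fps_nth P i = fps_nth Q i)"

lemma eqm_refl: "eqm m P P" by (simp add: eqm_def)
lemma eqm_sym: "eqm m P Q \<Longrightarrow> eqm m Q P" by (simp add: eqm_def)
lemma eqm_trans: "eqm m P Q \<Longrightarrow> eqm m Q R \<Longrightarrow> eqm m P R" by (simp add: eqm_def)

lemma eqm_mult: "eqm m P Q \<Longrightarrow> eqm m (S * P) (S * Q)"
  unfolding eqm_def by (auto intro!: mult_cong_nth)

lemma eqm_mult_right: "eqm m P Q \<Longrightarrow> eqm m (P * S) (Q * S)"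
  using eqm_mult[of m P Q S] by (simp add: mult.commute)

lemma eqm_pow_one: "eqm m P 1 \<Longrightarrow> eqm m (P ^ q) 1"
proof (induction q)
  case 0 then show ?case by (simp add: eqm_refl)
next
  case (Suc q)
  have "eqm m (P * P^q) (1 * P^q)" using Suc.prems by (rule eqm_mult_right)
  then have "eqm m (P^Suc q) (P^q)" by simp
  then show ?case using Suc by (blast intro: eqm_trans)
qed

lemma riordan_cong: "eqm m P Q \<Longrightarrow> riordan_trunc m P f = riordan_trunc m Q f"
  unfolding riordan_trunc_def eqm_def
  by (intro ext) (auto intro!: mult_cong_nth[of _ _ _ "f^_", simplified mult.commute])

lemma fps_sq_char2: "(1 + Y :: bit fps)^2 = 1 + Y^2"
proof -
  have "(1 + Y)^2 = 1 + (Y + Y) + Y^2" by (simp add: power2_eq_square algebra_simps)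
  then show ?thesis by (simp only: fps_add_self add_0_right)
qed

lemma GG_pow2: "GG ^ (2^k) = 1 + fps_X ^ (2^k)"
proof (induction k)
  case 0 then show ?case by (simp add: GG_def)
next
  case (Suc k)
  have "GG ^ (2^Suc k) = (GG^(2^k))^2" by (simp add: power_mult[symmetric] mult.commute)
  also have "\<dots> = 1 + (fps_X^(2^k))^2" by (simp only: Suc fps_sq_char2)
  also have "\<dots> = 1 + fps_X ^ (2^Suc k)" by (simp add: power_mult[symmetric] mult.commute)
  finally show ?case .
qed

lemma eqm_GGN: "m < 2^k \<Longrightarrow> eqm m (GG^(2^k)) 1"
  unfolding eqm_def GG_pow2 by auto

lemma eqm_GG_mod:
  assumes "m < 2^k"
  shows "eqm m (GG^j) (GG^(j mod 2^k))"
proof -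
  have "GG^j = (GG^(2^k))^(j div 2^k) * GG^(j mod 2^k)"
    by (simp add: power_mult[symmetric] power_add[symmetric])
  moreover have "eqm m ((GG^(2^k))^(j div 2^k) * GG^(j mod 2^k)) (1 * GG^(j mod 2^k))"
    by (intro eqm_mult_right eqm_pow_one eqm_GGN assms)
  ultimately show ?thesis by simp
qed

lemma of_nat_bit: "(of_nat u :: bit) = (if odd u then 1 else 0)"
  by (induction u) auto

lemma pow_X_p:
  assumes p: "1 \<le> p"
  shows "\<exists>Q. (1 + fps_X^p :: bit fps)^u = 1 + fps_X^p * Q \<and> fps_nth Q 0 = of_nat u"
proof (induction u)
  case 0 then show ?case by (intro exI[of _ 0]) simp
next
  case (Suc u)
  then obtain Q where Q: "(1 + fps_X^p :: bit fps)^u = 1 + fps_X^p * Q" "fps_nth Q 0 = of_nat u" by blast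
  have "(1 + fps_X^p :: bit fps)^Suc u = 1 + fps_X^p * (Q + 1 + fps_X^p * Q)"
    by (simp add: Q algebra_simps)
  moreover have "fps_nth (Q + 1 + fps_X^p * Q) 0 = of_nat (Suc u)"
    using p Q(2) by (simp add: fps_X_power_mult_nth del: add_bit_eq_xor of_nat_Suc) (simp add: add.commute)
  ultimately show ?case by blast
qed

lemma two_adic: "0 < (d::nat) \<Longrightarrow> \<exists>v u. d = 2^v * u \<and> odd u"
proof (induction d rule: less_induct)
  case (less d)
  show ?case
  proof (cases "odd d")
    case True then show ?thesis by (intro exI[of _ 0] exI[of _ d]) simp
  next
    case False
    then obtain d' where d: "d = 2 * d'" by blast
    with less.prems have "0 < d'" "d' < d" by auto
    with less.IH obtain v u where "d' = 2^v * u" "odd u" by blast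
    then show ?thesis using d by (intro exI[of _ "Suc v"] exI[of _ u]) simp
  qed
qed

lemma GG_inj:
  assumes ab: "a < b" and bN: "b < 2^(n+1)"
  shows "\<exists>i\<le>2^n. fps_nth (GG^a) i \<noteq> fps_nth (GG^b) i"
proof -
  obtain v u where d: "b - a = 2^v * u" and u: "odd u" using two_adic[of "b - a"] ab by auto
  have "2^v \<le> b - a" using d u by (cases u) auto
  then have "(2::nat)^v < 2^(n+1)" using bN by linarith
  then have "v < n+1" using nat_power_less_imp_less[of 2 v "n+1"] by simp
  then have "v \<le> n" by simp
  then have pn: "(2::nat)^v \<le> 2^n" by (simp add: power_increasing)
  define p where "p = (2::nat)^v"
  have p1: "1 \<le> p" by (simp add: p_def)
  obtain Q where Q: "(1 + fps_X^p :: bit fps)^u = 1 + fps_X^p * Q" "fps_nth Q 0 = of_nat u"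
    using pow_X_p[OF p1] by blast
  have Gp: "GG^p = 1 + fps_X^p" unfolding p_def by (rule GG_pow2)
  have "GG^(b-a) = (GG^p)^u" unfolding d power_mult p_def ..
  also have "\<dots> = 1 + fps_X^p * Q" unfolding Gp by (rule Q(1))
  finally have Gba: "GG^(b-a) = 1 + fps_X^p * Q" .
  have "GG^b = GG^a * GG^(b-a)" using ab by (simp add: power_add[symmetric])
  also have "GG^(b-a) = 1 + fps_X^p * Q" by (rule Gba)
  finally have "GG^b = GG^a + fps_X^p * (GG^a * Q)" by (simp add: algebra_simps)
  then have "fps_nth (GG^b) p = fps_nth (GG^a) p + fps_nth (GG^a * Q) 0"
    by (simp add: fps_X_power_mult_nth del: add_bit_eq_xor)
  also have "fps_nth (GG^a * Q) 0 = 1" using Q(2) u by (simp add: fps_power_zeroth of_nat_bit)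
  finally have "fps_nth (GG^b) p \<noteq> fps_nth (GG^a) p" by (cases "fps_nth (GG^a) p") auto
  then show ?thesis using pn p_def by (intro exI[of _ p]) auto
qed

definition hh :: "nat \<Rightarrow> nat \<Rightarrow> bool \<Rightarrow> nat \<Rightarrow> nat \<Rightarrow> bit" where
  "hh m a x = riordan_trunc m (GG^a) (if x then FF else fps_X)"

lemma FF1'[simp]: "fps_nth FF (Suc 0) = 1" using FF1 by simp

lemma hh_carrier: "hh m a x \<in> carrier (TR m)"
proof -
  have "is_riordan_pair (GG^a) (if x then FF else fps_X)"
    by (simp add: is_riordan_pair_def fps_power_zeroth)
  then have "riordan_trunc m (GG^a) (if x then FF else fps_X)
     \<in> {riordan_trunc m g f | g f. is_riordan_pair g f}" by blast
  then show ?thesis unfolding hh_def TR_def by simp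
qed

lemma hh_mult:
  assumes a: "a < 2^k" and b: "b < 2^k" and m: "m < 2^k"
  shows "trunc_mat_mult m (hh m a x) (hh m b y)
         = hh m ((if x then a + (2^k - b) else a + b) mod 2^k) (x \<noteq> y)"
proof (cases x)
  case False
  have "trunc_mat_mult m (hh m a x) (hh m b y) = riordan_trunc m (GG^(a+b)) (if y then FF else fps_X)"
    unfolding hh_def using False by (simp add: riordan_mult power_add)
  also have "\<dots> = hh m ((a+b) mod 2^k) y"
    unfolding hh_def by (rule riordan_cong[OF eqm_GG_mod[OF m]])
  finally show ?thesis using False by simp
next
  case True
  define H where "H = GG oo FF"
  have "trunc_mat_mult m (hh m a x) (hh m b y) = riordan_trunc m (GG^a * H^b) (if y then fps_X else FF)"
    unfolding hh_def H_def using True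
    by (simp add: riordan_mult fps_compose_power[OF FF0] FF_FF)
  also have "\<dots> = riordan_trunc m (GG^(a + (2^k - b))) (if y then fps_X else FF)"
  proof (rule riordan_cong)
    have "eqm m (GG^a * H^b * GG^(2^k)) (GG^a * H^b * 1)"
      by (intro eqm_mult eqm_GGN m)
    moreover have "GG^a * H^b * GG^(2^k) = GG^(a + (2^k - b))"
    proof -
      have "GG^(2^k) = GG^b * GG^(2^k - b)" using b by (simp add: power_add[symmetric])
      then have "GG^a * H^b * GG^(2^k) = GG^a * (H * GG)^b * GG^(2^k - b)"
        by (simp add: power_mult_distrib mult.assoc)
      also have "\<dots> = GG^(a + (2^k - b))" using HH_GG by (simp add: H_def power_add)
      finally show ?thesis .
    qed
    ultimately show "eqm m (GG^a * H^b) (GG^(a + (2^k - b)))" by (simp add: eqm_sym)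
  qed
  also have "\<dots> = hh m ((a + (2^k - b)) mod 2^k) (\<not> y)"
  proof -
    have e: "riordan_trunc m (GG^(a + (2^k-b))) F' = riordan_trunc m (GG^((a+(2^k-b)) mod 2^k)) F'" for F'
      by (rule riordan_cong[OF eqm_GG_mod[OF m]])
    show ?thesis unfolding hh_def e by simp
  qed
  finally show ?thesis using True by simp
qed

lemma hh_col0: "i \<le> m \<Longrightarrow> hh m a x i 0 = fps_nth (GG^a) i"
  by (simp add: hh_def riordan_trunc_def)

lemma inv_GG_1: "fps_nth (inverse GG) 1 = 1"
proof -
  have "fps_nth (GG * inverse GG) 1 = 0" by (simp add: inverse_mult_eq_1')
  then have "fps_nth (inverse GG) 1 + 1 = 0" by (simp add: GG_def del: add_bit_eq_xor mult_bit_eq_and)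
  then show ?thesis by (cases "fps_nth (inverse GG) 1") auto
qed

lemma hh_21:
  assumes "2 \<le> m"
  shows "hh m a x 2 1 = fps_nth (GG^a) 1 + (if x then 1 else 0)"
proof (cases x)
  case False
  then show ?thesis using assms
    by (simp add: hh_def riordan_trunc_def mult.commute[of _ fps_X] numeral_2_eq_2 del: add_bit_eq_xor mult_bit_eq_and)
next
  case True
  have e: "GG^a * FF = fps_X * (GG^a * inverse GG)" by (simp add: FF_def algebra_simps)
  have "fps_nth (GG^a * FF) 2 = fps_nth (GG^a * inverse GG) 1"
    unfolding e numeral_2_eq_2 fps_X_mult_nth by simp
  also have "\<dots> = fps_nth (GG^a) 1 + 1"
    using inv_GG_1 by (simp add: fps_power_zeroth add.commute del: add_bit_eq_xor mult_bit_eq_and)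
  finally have c: "fps_nth (GG^a * FF) 2 = fps_nth (GG^a) 1 + 1" .
  have "hh m a x 2 1 = fps_nth (GG^a * FF) 2"
    using True assms by (simp add: hh_def riordan_trunc_def del: add_bit_eq_xor mult_bit_eq_and)
  then show ?thesis using c True by simp
qed

theorem theorem12:
  fixes n :: nat
  assumes "n \<ge> 1"
  shows "\<exists>h. h \<in> hom (dihedral (2 ^ (n + 1))) (TR (2 ^ n)) \<and>
             inj_on h (carrier (dihedral (2 ^ (n + 1))))"
proof -
  let ?N = "2 ^ (n + 1) :: nat" and ?m = "2 ^ n :: nat"
  define h where "h = (\<lambda>(a, x). hh ?m a x)"
  have mN: "?m < ?N" by simp
  have m2: "2 \<le> ?m" using assms by (metis power_one_right power_increasing one_le_numeral)
  have "h \<in> hom (dihedral ?N) (TR ?m)"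
  proof (rule homI)
    fix p assume "p \<in> carrier (dihedral ?N)"
    then show "h p \<in> carrier (TR ?m)" by (cases p) (simp add: h_def hh_carrier)
  next
    fix p q assume p: "p \<in> carrier (dihedral ?N)" and q: "q \<in> carrier (dihedral ?N)"
    obtain a x where px: "p = (a, x)" by (cases p)
    obtain b y where qy: "q = (b, y)" by (cases q)
    have a: "a < ?N" and b: "b < ?N" using p q px qy by (auto simp: dihedral_def)
    show "h (p \<otimes>\<^bsub>dihedral ?N\<^esub> q) = h p \<otimes>\<^bsub>TR ?m\<^esub> h q"
      using hh_mult[OF a b mN, of x y] by (simp add: px qy h_def dihedral_def TR_def)
  qed
  moreover have "inj_on h (carrier (dihedral ?N))"
  proof (rule inj_onI)
    fix p q assume p: "p \<in> carrier (dihedral ?N)" and q: "q \<in> carrier (dihedral ?N)"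
      and eq: "h p = h q"
    obtain a x where px: "p = (a, x)" by (cases p)
    obtain b y where qy: "q = (b, y)" by (cases q)
    have a: "a < ?N" and b: "b < ?N" using p q px qy by (auto simp: dihedral_def)
    have E: "hh ?m a x = hh ?m b y" using eq px qy by (simp add: h_def)
    have col: "\<forall>i\<le>?m. fps_nth (GG^a) i = fps_nth (GG^b) i"
      using E hh_col0[of _ ?m a x] hh_col0[of _ ?m b y] by metis
    have "hh ?m a x 2 1 = hh ?m b y 2 1" using E by simp
    then have "fps_nth (GG^a) 1 + (if x then 1 else 0) = fps_nth (GG^b) 1 + (if y then 1 else 0)"
      using hh_21[OF m2] by simp
    moreover have "fps_nth (GG^a) 1 = fps_nth (GG^b) 1" using col m2 by simp
    ultimately have xy: "x = y" by (cases x; cases y; cases "fps_nth (GG^b) 1") auto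
    have "a = b"
    proof (rule ccontr)
      assume "a \<noteq> b"
      then consider "a < b" | "b < a" by linarith
      then show False
      proof cases
        case 1 then show False using GG_inj[OF 1 b] col by auto
      next
        case 2 then show False using GG_inj[OF 2 a] col by auto
      qed
    qed
    then show "p = q" using px qy xy by simp
  qed
  ultimately show ?thesis by blast
qed

end
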